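(* Let $\mathcal{S}=\{\mathbf{y}\in\mathbb{R}^{d_y}: \mathbf{m}_k^\top\mathbf{y}\le b_k,\ k=1,\dots,l\}$ be a bounded convex polytope with nonzero normals $\mathbf{m}_k$, and let $w_\eta(\mathbf{y})=\prod_{k=1}^l\Phi(\eta(b_k-\mathbf{m}_k^\top\mathbf{y}))$, $\eta>0$. Fix $\mathbf{x}$ and $\mathbf{a}$ and suppose the post-alteration distribution $P(\cdot\mid\mathbf{x},\mathring{\mathbf{a}})$ of $\mathbf{Y}$ has a density bounded by a constant $M$. Then, as $\eta\to\infty$, $$\Big|\mathbb{P}(\mathbf{Y}\in\mathcal{S}\mid\mathbf{x},\mathring{\mathbf{a}})-\mathbb{E}_{\mathbf{y}\sim P(\cdot\mid\mathbf{x},\mathring{\mathbf{a}})}[w_\eta(\mathbf{y})]\Big|=\mathcal{O}\!\left(\frac{\sqrt{\ln\eta}}{\eta}\right),$$ where the implied constant depends only on $\mathcal{S}$, $l$ and $M$.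
   Context: $\Phi$ is the standard normal CDF. $P(\cdot\mid\mathbf{x},\mathring{\mathbf{a}})$ is the distribution of the outcome $\mathbf{Y}$ given context $\mathbf{x}$ after the intervention setting the actionable variables $\mathbf{A}$ to $\mathbf{a}$. *)

theory Defs
  imports "HOL-Probability.Probability"
begin

definition Phi :: "real \<Rightarrow> real" where
  "Phi x = measure (density lborel (\<lambda>t. ennreal (std_normal_density t))) {..x}"

text \<open>The polytope S = {y. m_k . y <= b_k, k = 0..l-1} (indices shifted to 0-based).\<close>
definition polytope :: "(nat \<Rightarrow> 'a::euclidean_space) \<Rightarrow> (nat \<Rightarrow> real) \<Rightarrow> nat \<Rightarrow> 'a set" where
  "polytope m b l = {y. \<forall>k<l. m k \<bullet> y \<le> b k}"

definition weta :: "(nat \<Rightarrow> 'a::euclidean_space) \<Rightarrow> (nat \<Rightarrow> real) \<Rightarrow> nat \<Rightarrow> real \<Rightarrow> 'a \<Rightarrow> real" where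
  "weta m b l \<eta> y = (\<Prod>k<l. Phi (\<eta> * (b k - m k \<bullet> y)))"

end

theory Submission
  imports Defs "HOL-Real_Asymp.Real_Asymp"
begin


lemma phi_lim: "((\<lambda>x. - std_normal_density x) \<longlongrightarrow> 0) at_top"
  unfolding std_normal_density_def by real_asymp

lemma phi_deriv: "DERIV (\<lambda>x. - std_normal_density x) x :> x * std_normal_density x"
  unfolding std_normal_density_def
  by (auto intro!: derivative_eq_intros simp: field_simps power2_eq_square)

lemma upper_nn:
  assumes "1 \<le> s"
  shows "(\<integral>\<^sup>+x. ennreal (std_normal_density x) * indicator {s..} x \<partial>lborel) \<le> ennreal (std_normal_density s)"
proof -
  have "(\<integral>\<^sup>+x. ennreal (std_normal_density x) * indicator {s..} x \<partial>lborel)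
     \<le> (\<integral>\<^sup>+x. ennreal (x * std_normal_density x) * indicator {s..} x \<partial>lborel)"
  proof (rule nn_integral_mono)
    fix x show "ennreal (std_normal_density x) * indicator {s..} x \<le> ennreal (x * std_normal_density x) * indicator {s..} x"
    proof (cases "s \<le> x")
      case True
      have "std_normal_density x \<le> x * std_normal_density x"
        using mult_right_mono[of 1 x "std_normal_density x"] True assms normal_density_nonneg[of 0 1 x] by simp
      then show ?thesis using True by (simp add: ennreal_leI)
    qed simp
  qed
  also have "\<dots> = ennreal (0 - (- std_normal_density s))"
    by (rule nn_integral_FTC_atLeast[OF _ phi_deriv _ phi_lim])
       (use assms in auto)
  finally show ?thesis by simp
qed

lemma Phi_upper_tail:
  assumes "1 \<le> s"
  shows "1 - Phi s \<le> std_normal_density s"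
proof -
  interpret D: prob_space "density lborel std_normal_density" by (rule prob_space_normal_density) simp
  have "1 - Phi s = measure (density lborel std_normal_density) (- {..s})"
    unfolding Phi_def using D.prob_compl[of "{..s}"] by (simp add: Compl_eq_Diff_UNIV)
  also have "\<dots> \<le> measure (density lborel std_normal_density) {s..}"
    by (intro D.finite_measure_mono) auto
  also have "\<dots> \<le> std_normal_density s"
  proof -
    have "emeasure (density lborel std_normal_density) {s..} \<le> ennreal (std_normal_density s)"
      using upper_nn[OF assms] by (subst emeasure_density) (auto simp: mult.commute)
    then show ?thesis unfolding D.emeasure_eq_measure by (simp add: ennreal_le_iff)
  qed
  finally show ?thesis .
qed

lemma Phi_lower_tail:
  assumes "1 \<le> s"
  shows "Phi (- s) \<le> std_normal_density s"
proof -
  interpret D: prob_space "density lborel std_normal_density" by (rule prob_space_normal_density) simp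
  have "emeasure (density lborel std_normal_density) {..-s}
       = (\<integral>\<^sup>+x. ennreal (std_normal_density x) * indicator {..-s} x \<partial>lborel)"
    by (subst emeasure_density) (auto simp: mult.commute)
  also have "\<dots> = (\<integral>\<^sup>+x. ennreal (std_normal_density x) * indicator {..-s} x \<partial>distr lborel borel uminus)"
    by (simp add: lborel_distr_uminus)
  also have "\<dots> = (\<integral>\<^sup>+x. ennreal (std_normal_density (-x)) * indicator {..-s} (-x) \<partial>lborel)"
    by (subst nn_integral_distr) auto
  also have "\<dots> = (\<integral>\<^sup>+x. ennreal (std_normal_density x) * indicator {s..} x \<partial>lborel)"
    by (intro nn_integral_cong) (auto simp: std_normal_density_def split: split_indicator)
  also have "\<dots> \<le> ennreal (std_normal_density s)" by (rule upper_nn[OF assms])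
  finally show ?thesis unfolding Phi_def D.emeasure_eq_measure by (simp add: ennreal_le_iff)
qed

lemma phi_le: "std_normal_density s \<le> exp (- s\<^sup>2 / 2)"
proof -
  have "1 \<le> sqrt (2 * pi)" using pi_gt3 by (simp add: real_le_rsqrt)
  then show ?thesis unfolding std_normal_density_def
    by (simp add: divide_le_eq)
qed



lemma slab_lmeasurable:
  fixes m :: "'a::euclidean_space"
  shows "{y. \<bar>c - m \<bullet> y\<bar> < t} \<inter> cball 0 R \<in> lmeasurable"
proof (rule bounded_set_imp_lmeasurable)
  show "bounded ({y. \<bar>c - m \<bullet> y\<bar> < t} \<inter> cball 0 R)" by (simp add: bounded_Int)
  have "{y. \<bar>c - m \<bullet> y\<bar> < t} \<in> sets borel" by measurable
  then have "{y. \<bar>c - m \<bullet> y\<bar> < t} \<inter> cball 0 R \<in> sets borel" by auto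
  then show "{y. \<bar>c - m \<bullet> y\<bar> < t} \<inter> cball 0 R \<in> sets lebesgue"
    by (simp add: sets_completionI_sets)
qed

lemma slab_measure:
  fixes m :: "'a::euclidean_space"
  assumes m: "m \<noteq> 0" and t: "0 < t" and R: "0 \<le> R"
  shows "measure lebesgue ({y. \<bar>c - m \<bullet> y\<bar> < t} \<inter> cball 0 R)
           \<le> 4 * t / norm m * measure lebesgue (cball (0::'a) (R+1))"
proof -
  define S where "S = {y. \<bar>c - m \<bullet> y\<bar> < t} \<inter> cball (0::'a) R"
  define V where "V = measure lebesgue (cball (0::'a) (R+1))"
  have Sm: "S \<in> lmeasurable" unfolding S_def by (rule slab_lmeasurable)
  have nm: "0 < norm m" using m by simp
  have V0: "0 \<le> V" unfolding V_def by simp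
  have SV: "measure lebesgue S \<le> V"
    unfolding V_def by (rule measure_mono_fmeasurable) (auto simp: S_def fmeasurableD[OF Sm])
  show ?thesis
  proof (cases "norm m < 2 * t")
    case True
    have "1 \<le> 4 * t / norm m" using True nm t by (simp add: field_simps)
    then have "V \<le> 4 * t / norm m * V" using V0 mult_right_mono[of 1 "4 * t / norm m" V] by simp
    then show ?thesis using SV unfolding S_def V_def by linarith
  next
    case False
    define x where "x = norm m / (2 * t)"
    have x1: "1 \<le> x" using False t unfolding x_def by (simp add: field_simps)
    define N where "N = nat \<lfloor>x\<rfloor>"
    have N1: "1 \<le> N" using x1 unfolding N_def by linarith
    have Nx: "real N \<le> x" using x1 unfolding N_def by linarith
    have fl: "1 \<le> \<lfloor>x\<rfloor>" using x1 by linarith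
    have Nfl: "real N = real_of_int \<lfloor>x\<rfloor>" unfolding N_def using fl by simp
    have Nx2: "x / 2 \<le> real N" unfolding Nfl using x1 fl floor_correct[of x] by linarith
    define v where "v = (2 * t / (norm m)\<^sup>2) *\<^sub>R m"
    have mv: "m \<bullet> v = 2 * t" unfolding v_def using nm
      by (simp add: power2_norm_eq_inner[symmetric] power2_eq_square)
    have nv: "norm v = 2 * t / norm m" unfolding v_def using nm t
      by (simp add: power2_eq_square)
    define T where "T j = (+) (real j *\<^sub>R v) ` S" for j :: nat
    have Tm: "T j \<in> lmeasurable" for j unfolding T_def by (rule measurable_translation[OF Sm])
    have TS: "measure lebesgue (T j) = measure lebesgue S" for j
      unfolding T_def by (rule measure_translation)
    have Tsub: "T j \<subseteq> cball 0 (R+1)" if "j < N" for j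
    proof
      fix z assume "z \<in> T j"
      then obtain y where y: "y \<in> S" and z: "z = real j *\<^sub>R v + y" unfolding T_def by auto
      have "norm z \<le> real j * norm v + norm y" unfolding z
        using norm_triangle_ineq[of "real j *\<^sub>R v" y] by simp
      also have "real j * norm v \<le> real N * norm v" using that by (simp add: mult_right_mono)
      also have "real N * norm v \<le> x * norm v" using Nx by (simp add: mult_right_mono)
      also have "x * norm v = 1" unfolding x_def nv using nm t by simp
      also have "norm y \<le> R" using y unfolding S_def by simp
      finally show "z \<in> cball 0 (R+1)" by simp
    qed
    have disj: "pairwise (\<lambda>i j. disjnt (T i) (T j)) {..<N}"
    proof (clarsimp simp: pairwise_def disjnt_def)
      fix i j :: nat assume ij: "i \<noteq> j"
      show "T i \<inter> T j = {}"
      proof (rule ccontr)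
        assume "T i \<inter> T j \<noteq> {}"
        then obtain y y' where y: "y \<in> S" and y': "y' \<in> S"
          and e: "real i *\<^sub>R v + y = real j *\<^sub>R v + y'" unfolding T_def by auto
        have "m \<bullet> (real i *\<^sub>R v + y) = m \<bullet> (real j *\<^sub>R v + y')" using e by simp
        then have "2 * t * real i + m \<bullet> y = 2 * t * real j + m \<bullet> y'"
          by (simp add: inner_add_right mv algebra_simps)
        moreover have "\<bar>c - m \<bullet> y\<bar> < t" "\<bar>c - m \<bullet> y'\<bar> < t" using y y' unfolding S_def by auto
        ultimately have "\<bar>2 * t * (real i - real j)\<bar> < 2 * t" by (simp add: algebra_simps abs_less_iff)
        then have "\<bar>real i - real j\<bar> < 1" using t by (simp add: abs_mult)
        then show False using ij by linarith
      qed
    qed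
    have "real N * measure lebesgue S = (\<Sum>j<N. measure lebesgue (T j))" by (simp add: TS)
    also have "\<dots> = measure lebesgue (\<Union>j<N. T j)"
      by (rule measure_UNION'[symmetric]) (use Tm disj in auto)
    also have "\<dots> \<le> V" unfolding V_def
      by (rule measure_mono_fmeasurable) (use Tsub Tm in \<open>auto intro!: fmeasurableD\<close>)
    finally have NS: "real N * measure lebesgue S \<le> V" .
    have "measure lebesgue S \<le> V / real N" using NS N1 by (simp add: field_simps)
    also have "\<dots> \<le> V / (x / 2)" using Nx2 x1 V0 by (intro divide_left_mono) auto
    also have "\<dots> = 4 * t / norm m * V" unfolding x_def using nm t by (simp add: field_simps)
    finally show ?thesis unfolding S_def V_def .
  qed
qed



definition polyt :: "(nat \<Rightarrow> 'a::euclidean_space) \<Rightarrow> (nat \<Rightarrow> real) \<Rightarrow> nat \<Rightarrow> real \<Rightarrow> 'a set" where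
  "polyt m b l t = {y. \<forall>k<l. m k \<bullet> y \<le> b k + t}"

lemma closed_polyt: "closed (polyt m b l t)"
proof -
  have "polyt m b l t = (\<Inter>k\<in>{..<l}. {y. m k \<bullet> y \<le> b k + t})" unfolding polyt_def by auto
  then show ?thesis by (auto intro!: closed_INT closed_halfspace_le)
qed

lemma polyt_mono: "t \<le> t' \<Longrightarrow> polyt m b l t \<subseteq> polyt m b l t'"
  unfolding polyt_def by force

lemma dir_lemma:
  fixes y :: "nat \<Rightarrow> 'a::euclidean_space"
  assumes lim: "filterlim (\<lambda>n. norm (y n)) at_top sequentially"
    and le: "\<And>n k. k < l \<Longrightarrow> m k \<bullet> y n \<le> b k + 1"
  shows "\<exists>d r. norm d = 1 \<and> strict_mono r \<and>
           ((\<lambda>n. (1 / norm (y (r n))) *\<^sub>R y (r n)) \<longlonglongrightarrow> d) \<and> (\<forall>k<l. m k \<bullet> d \<le> 0)"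
proof -
  obtain N where N: "\<And>n. n \<ge> N \<Longrightarrow> 1 \<le> norm (y n)"
    using lim unfolding filterlim_at_top eventually_sequentially by blast
  define z where "z n = (1 / norm (y (n + N))) *\<^sub>R y (n + N)" for n
  have zS: "\<forall>n. z n \<in> sphere (0::'a) 1"
  proof
    fix n have "1 \<le> norm (y (n + N))" using N by simp
    then show "z n \<in> sphere 0 1" unfolding z_def by (cases "y (n + N) = 0") auto
  qed
  obtain d r where d: "d \<in> sphere (0::'a) 1" and r: "strict_mono r" and lz: "(z \<circ> r) \<longlonglongrightarrow> d"
    using seq_compactE[OF compact_imp_seq_compact[OF compact_sphere] zS] by blast
  define r' where "r' n = r n + N" for n
  have r': "strict_mono r'" using r unfolding r'_def strict_mono_def by simp
  have zr: "(\<lambda>n. (1 / norm (y (r' n))) *\<^sub>R y (r' n)) = z \<circ> r"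
    unfolding r'_def z_def by auto
  have limr: "filterlim (\<lambda>n. norm (y (r' n))) at_top sequentially"
    using filterlim_compose[OF lim filterlim_subseq[OF r']] by (simp add: o_def)
  have "m k \<bullet> d \<le> 0" if k: "k < l" for k
  proof (rule tendsto_le[OF trivial_limit_sequentially])
    show "((\<lambda>n. m k \<bullet> (z \<circ> r) n) \<longlongrightarrow> m k \<bullet> d) sequentially"
      by (intro tendsto_intros lz)
    show "((\<lambda>n. (b k + 1) / norm (y (r' n))) \<longlongrightarrow> 0) sequentially"
      by (rule tendsto_divide_0[OF tendsto_const filterlim_at_top_imp_at_infinity[OF limr]])
    show "\<forall>\<^sub>F n in sequentially. m k \<bullet> (z \<circ> r) n \<le> (b k + 1) / norm (y (r' n))"
    proof (rule always_eventually, rule allI)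
      fix n
      have pos: "0 < norm (y (r' n))" using N[of "r' n"] unfolding r'_def by linarith
      have "m k \<bullet> (z \<circ> r) n = (m k \<bullet> y (r' n)) / norm (y (r' n))"
        by (simp add: zr[symmetric])
      also have "\<dots> \<le> (b k + 1) / norm (y (r' n))"
        using le[OF k] pos by (simp add: divide_right_mono)
      finally show "m k \<bullet> (z \<circ> r) n \<le> (b k + 1) / norm (y (r' n))" .
    qed
  qed
  then show ?thesis using d r' zr lz by (intro exI[of _ d] exI[of _ r']) auto
qed



lemma bnd_nonempty:
  fixes m :: "nat \<Rightarrow> 'a::euclidean_space"
  assumes y0: "y0 \<in> polyt m b l 0" and bd: "bounded (polyt m b l 0)"
  shows "bounded (polyt m b l 1)"
proof (rule ccontr)
  assume nb: "\<not> bounded (polyt m b l 1)"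
  have "\<forall>n::nat. \<exists>y. y \<in> polyt m b l 1 \<and> real n < norm y"
  proof
    fix n :: nat
    have "\<not> (\<forall>x\<in>polyt m b l 1. norm x \<le> real n)" using nb unfolding bounded_iff by blast
    then show "\<exists>y. y \<in> polyt m b l 1 \<and> real n < norm y" by (auto simp: not_le)
  qed
  then obtain y where yy: "\<forall>n. y n \<in> polyt m b l 1 \<and> real n < norm (y n)"
    using choice[of "\<lambda>n y. y \<in> polyt m b l 1 \<and> real n < norm y"] by blast
  then have y: "\<And>n. y n \<in> polyt m b l 1" "\<And>n. real n < norm (y n)" by auto
  have lim: "filterlim (\<lambda>n. norm (y n)) at_top sequentially"
  proof (rule filterlim_at_top_mono[OF filterlim_real_sequentially])
    show "\<forall>\<^sub>F n in sequentially. real n \<le> norm (y n)"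
      using y(2) less_imp_le by (intro always_eventually) blast
  qed
  have le: "\<And>n k. k < l \<Longrightarrow> m k \<bullet> y n \<le> b k + 1" using y(1) unfolding polyt_def by auto
  obtain d r where d: "norm d = 1" "\<forall>k<l. m k \<bullet> d \<le> 0"
    using dir_lemma[where l=l and m=m and b=b, OF lim le] by auto
  obtain K where K: "\<And>x. x \<in> polyt m b l 0 \<Longrightarrow> norm x \<le> K" using bd unfolding bounded_iff by blast
  define s where "s = K + norm y0 + 1"
  have s0: "0 \<le> s" using K[OF y0] norm_ge_zero[of y0] unfolding s_def by linarith
  have "y0 + s *\<^sub>R d \<in> polyt m b l 0"
    unfolding polyt_def
  proof (intro CollectI allI impI)
    fix k assume k: "k < l"
    have "m k \<bullet> y0 \<le> b k" using y0 k unfolding polyt_def by auto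
    moreover have "s * (m k \<bullet> d) \<le> 0" using d(2) k s0 by (simp add: mult_nonneg_nonpos)
    ultimately show "m k \<bullet> (y0 + s *\<^sub>R d) \<le> b k + 0" by (simp add: inner_add_right)
  qed
  then have "norm (y0 + s *\<^sub>R d) \<le> K" by (rule K)
  moreover have "s - norm y0 \<le> norm (y0 + s *\<^sub>R d)"
  proof -
    have "norm (s *\<^sub>R d) - norm y0 \<le> norm (s *\<^sub>R d + y0)" by (rule norm_diff_ineq)
    then show ?thesis using d s0 by (simp add: add.commute)
  qed
  ultimately show False unfolding s_def by simp
qed



lemma bnd_empty:
  fixes m :: "nat \<Rightarrow> 'a::euclidean_space"
  assumes emp: "polyt m b l 0 = {}"
  shows "\<exists>t>0. polyt m b l t = {}"
proof (rule ccontr)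
  assume "\<not> (\<exists>t>0. polyt m b l t = {})"
  then have ne: "\<And>n. polyt m b l (inverse (real (Suc n))) \<noteq> {}" by simp
  define P where "P n = polyt m b l (inverse (real (Suc n)))" for n
  have "\<forall>n. \<exists>x. x \<in> P n \<and> (\<forall>z\<in>P n. norm x \<le> norm z)"
  proof
    fix n
    obtain x where "x \<in> P n" "\<And>z. z \<in> P n \<Longrightarrow> dist 0 x \<le> dist 0 z"
      using distance_attains_inf[OF closed_polyt ne[of n], of 0] unfolding P_def by blast
    then show "\<exists>x. x \<in> P n \<and> (\<forall>z\<in>P n. norm x \<le> norm z)" by auto
  qed
  then obtain y where yy: "\<forall>n. y n \<in> P n \<and> (\<forall>z\<in>P n. norm (y n) \<le> norm z)"
    using choice[of "\<lambda>n x. x \<in> P n \<and> (\<forall>z\<in>P n. norm x \<le> norm z)"] by blast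
  have yP: "\<And>n. y n \<in> P n" and ymin: "\<And>n z. z \<in> P n \<Longrightarrow> norm (y n) \<le> norm z"
    using yy by auto
  have Pmono: "P n' \<subseteq> P n" if "n \<le> n'" for n n'
    unfolding P_def using that by (intro polyt_mono) (simp add: le_imp_inverse_le)
  have ymono: "norm (y n) \<le> norm (y n')" if "n \<le> n'" for n n'
    using ymin[of "y n'" n] Pmono[OF that] yP[of n'] by blast
  have yle: "m k \<bullet> y n \<le> b k + inverse (real (Suc n))" if "k < l" for k n
    using yP[of n] that unfolding P_def polyt_def by auto
  show False
  proof (cases "\<exists>K. \<forall>n. norm (y n) \<le> K")
    case True
    then obtain K where K: "\<And>n. norm (y n) \<le> K" by blast
    have "\<forall>n. y n \<in> cball 0 K" using K by simp
    then obtain x r where r: "strict_mono r" and lx: "(y \<circ> r) \<longlonglongrightarrow> x"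
      using seq_compactE[OF compact_imp_seq_compact[OF compact_cball]] by metis
    have "x \<in> polyt m b l 0" unfolding polyt_def
    proof (intro CollectI allI impI)
      fix k assume k: "k < l"
      have "m k \<bullet> x \<le> b k + 0"
      proof (rule tendsto_le[OF trivial_limit_sequentially])
        show "((\<lambda>n. m k \<bullet> (y \<circ> r) n) \<longlongrightarrow> m k \<bullet> x) sequentially"
          by (intro tendsto_intros lx)
        have "((\<lambda>n. inverse (real (Suc n))) \<circ> r) \<longlonglongrightarrow> 0"
          by (rule LIMSEQ_subseq_LIMSEQ[OF LIMSEQ_inverse_real_of_nat r])
        then show "((\<lambda>n. b k + inverse (real (Suc (r n)))) \<longlongrightarrow> b k + 0) sequentially"
          by (intro tendsto_intros) (simp add: o_def)
        show "\<forall>\<^sub>F n in sequentially. m k \<bullet> (y \<circ> r) n \<le> b k + inverse (real (Suc (r n)))"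
          using yle[OF k] by simp
      qed
      then show "m k \<bullet> x \<le> b k + 0" .
    qed
    then show False using emp by simp
  next
    case False
    have lim: "filterlim (\<lambda>n. norm (y n)) at_top sequentially"
      unfolding filterlim_at_top eventually_sequentially
    proof
      fix Z
      obtain n0 where "\<not> norm (y n0) \<le> Z" using False by blast
      then show "\<exists>N. \<forall>n\<ge>N. Z \<le> norm (y n)" using ymono by (meson order.trans linear)
    qed
    have le1: "\<And>n k. k < l \<Longrightarrow> m k \<bullet> y n \<le> b k + 1"
    proof -
      fix n k assume "k < l"
      have "inverse (real (Suc n)) \<le> 1" by (simp add: field_simps)
      then show "m k \<bullet> y n \<le> b k + 1" using yle[OF \<open>k < l\<close>, of n] by linarith
    qed
    obtain d r where d1: "norm d = 1" and r: "strict_mono r"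
      and ld: "(\<lambda>n. (1 / norm (y (r n))) *\<^sub>R y (r n)) \<longlonglongrightarrow> d"
      and dk: "\<forall>k<l. m k \<bullet> d \<le> 0"
      using dir_lemma[where l=l and m=m and b=b, OF lim le1] by blast
    define Y where "Y n = y (r n)" for n
    define u where "u n = (1 / norm (Y n)) *\<^sub>R Y n" for n
    have lu: "u \<longlonglongrightarrow> d" using ld unfolding u_def Y_def .
    have limY: "filterlim (\<lambda>n. norm (Y n)) at_top sequentially"
      unfolding Y_def using filterlim_compose[OF lim filterlim_subseq[OF r]] by (simp add: o_def)
    have Yu: "Y n = norm (Y n) *\<^sub>R u n" for n
      unfolding u_def by (cases "Y n = 0") auto
    have E1': "\<forall>k\<in>{..<l}. \<forall>\<^sub>F n in sequentially. m k \<bullet> d < 0 \<longrightarrow> m k \<bullet> (Y n - d) \<le> b k"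
    proof (intro ballI)
      fix k assume "k \<in> {..<l}"
      show "\<forall>\<^sub>F n in sequentially. m k \<bullet> d < 0 \<longrightarrow> m k \<bullet> (Y n - d) \<le> b k"
      proof (cases "m k \<bullet> d < 0")
        case False then show ?thesis by simp
      next
      case neg: True
      define a where "a = - (m k \<bullet> d)"
      have a: "0 < a" using neg unfolding a_def by simp
      have "((\<lambda>n. m k \<bullet> u n) \<longlongrightarrow> m k \<bullet> d) sequentially" by (intro tendsto_intros lu)
      then have ev1: "\<forall>\<^sub>F n in sequentially. m k \<bullet> u n < - a / 2"
        using a unfolding a_def by (intro order_tendstoD(2)) auto
      have ev2: "\<forall>\<^sub>F n in sequentially. 2 * (\<bar>b k\<bar> + a) / a + 1 \<le> norm (Y n)"
        using limY unfolding filterlim_at_top by blast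
      show "\<forall>\<^sub>F n in sequentially. m k \<bullet> d < 0 \<longrightarrow> m k \<bullet> (Y n - d) \<le> b k"
        using ev1 ev2
      proof eventually_elim
        case (elim n)
        have nY: "0 < norm (Y n)" using elim(2) a
          by (smt (verit) divide_nonneg_pos abs_ge_zero)
        have "m k \<bullet> Y n = norm (Y n) * (m k \<bullet> u n)" by (subst Yu) simp
        also have "\<dots> \<le> norm (Y n) * (- a / 2)"
          using elim(1) nY by (intro mult_left_mono) auto
        finally have A: "m k \<bullet> Y n \<le> - (norm (Y n) * a) / 2" by simp
        have h: "2 * (\<bar>b k\<bar> + a) / a \<le> norm (Y n)" using elim(2) by linarith
        have "2 * (\<bar>b k\<bar> + a) \<le> norm (Y n) * a"
          using h a by (simp add: divide_le_eq)
        then have X: "- (norm (Y n) * a) / 2 \<le> - (\<bar>b k\<bar> + a)" by (simp add: field_simps)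
        have "m k \<bullet> Y n \<le> - (\<bar>b k\<bar> + a)" using A X by (rule order_trans)
        then show ?case unfolding a_def using abs_ge_minus_self[of "b k"] by (simp add: inner_diff_right)
      qed
      qed
    qed
    have E1: "\<forall>\<^sub>F n in sequentially. \<forall>k\<in>{..<l}. m k \<bullet> d < 0 \<longrightarrow> m k \<bullet> (Y n - d) \<le> b k"
      by (rule eventually_ball_finite[OF finite_lessThan E1'])
    have E2: "\<forall>\<^sub>F n in sequentially. norm (Y n - d) < norm (Y n)"
    proof -
      have "((\<lambda>n. u n \<bullet> d) \<longlongrightarrow> d \<bullet> d) sequentially" by (intro tendsto_intros lu)
      moreover have "d \<bullet> d = 1" using d1 by (simp add: power2_norm_eq_inner[symmetric])
      ultimately have ev1: "\<forall>\<^sub>F n in sequentially. 1/2 < u n \<bullet> d"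
        by (intro order_tendstoD(1)) auto
      have ev2: "\<forall>\<^sub>F n in sequentially. 2 \<le> norm (Y n)"
        using limY unfolding filterlim_at_top by blast
      show ?thesis using ev1 ev2
      proof eventually_elim
        case (elim n)
        have "Y n \<bullet> d = norm (Y n) * (u n \<bullet> d)" by (subst Yu) simp
        also have "\<dots> > norm (Y n) * (1/2)" using elim by (intro mult_strict_left_mono) auto
        finally have yd: "norm (Y n) / 2 < Y n \<bullet> d" by simp
        have "(norm (Y n - d))\<^sup>2 = (norm (Y n))\<^sup>2 - 2 * (Y n \<bullet> d) + (norm d)\<^sup>2"
          by (simp add: power2_norm_eq_inner inner_diff_left inner_diff_right inner_commute)
        also have "\<dots> < (norm (Y n))\<^sup>2" using yd elim(2) d1 by simp
        finally show ?case by (rule power2_less_imp_less) simp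
      qed
    qed
    obtain n where n1: "\<forall>k\<in>{..<l}. m k \<bullet> d < 0 \<longrightarrow> m k \<bullet> (Y n - d) \<le> b k"
      and n2: "norm (Y n - d) < norm (Y n)"
      using eventually_happens'[OF _ eventually_conj[OF E1 E2]] by auto
    have "Y n - d \<in> P (r n)" unfolding P_def polyt_def
    proof (intro CollectI allI impI)
      fix k assume k: "k < l"
      have ip: "0 \<le> inverse (real (Suc (r n)))" by simp
      show "m k \<bullet> (Y n - d) \<le> b k + inverse (real (Suc (r n)))"
      proof (cases "m k \<bullet> d < 0")
        case True
        then have "m k \<bullet> (Y n - d) \<le> b k" using n1 k by blast
        then show ?thesis using ip by linarith
      next
        case False
        then have "m k \<bullet> d = 0" using dk k by force
        then show ?thesis using yle[OF k, of "r n"] unfolding Y_def by (simp add: inner_diff_right)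
      qed
    qed
    then have "norm (Y n) \<le> norm (Y n - d)" unfolding Y_def by (rule ymin)
    then show False using n2 by simp
  qed
qed

lemma bnd:
  fixes m :: "nat \<Rightarrow> 'a::euclidean_space"
  assumes bd: "bounded (polyt m b l 0)"
  shows "\<exists>t>0. bounded (polyt m b l t)"
proof (cases "polyt m b l 0 = {}")
  case True then show ?thesis using bnd_empty[OF True] by (metis bounded_empty)
next
  case False
  then obtain y0 where "y0 \<in> polyt m b l 0" by blast
  then show ?thesis using bnd_nonempty[OF _ bd] by (intro exI[of _ 1]) auto
qed



lemma Phi_mono: "x \<le> y \<Longrightarrow> Phi x \<le> Phi y"
proof -
  interpret D: prob_space "density lborel std_normal_density" by (rule prob_space_normal_density) simp
  assume "x \<le> y"
  then show ?thesis unfolding Phi_def by (intro D.finite_measure_mono) auto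
qed

lemma Phi_nonneg: "0 \<le> Phi x" unfolding Phi_def by simp

lemma Phi_le1: "Phi x \<le> 1"
proof -
  interpret D: prob_space "density lborel std_normal_density" by (rule prob_space_normal_density) simp
  show ?thesis unfolding Phi_def by simp
qed

lemma Phi_measurable[measurable]: "Phi \<in> borel_measurable borel"
  by (rule borel_measurable_mono) (auto simp: mono_def Phi_mono)

lemma prod_ge_bernoulli:
  fixes x :: "nat \<Rightarrow> real"
  assumes "\<And>k. k < l \<Longrightarrow> 0 \<le> x k \<and> x k \<le> 1"
  shows "1 - (\<Sum>k<l. 1 - x k) \<le> (\<Prod>k<l. x k)"
  using assms
proof (induction l)
  case 0 then show ?case by simp
next
  case (Suc l)
  have IH: "1 - (\<Sum>k<l. 1 - x k) \<le> (\<Prod>k<l. x k)" using Suc by auto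
  have p0: "0 \<le> (\<Prod>k<l. x k)" "(\<Prod>k<l. x k) \<le> 1"
    using Suc.prems by (auto intro!: prod_nonneg prod_le_1)
  have xl: "0 \<le> x l" "x l \<le> 1" using Suc.prems by auto
  have "1 - (\<Sum>k<Suc l. 1 - x k) = (1 - (\<Sum>k<l. 1 - x k)) - (1 - x l)" by simp
  also have "\<dots> \<le> (\<Prod>k<l. x k) - (1 - x l)" using IH by simp
  also have "\<dots> \<le> (\<Prod>k<l. x k) * x l"
  proof -
    have "(\<Prod>k<l. x k) * (1 - x l) \<le> 1 - x l" using p0 xl by (simp add: mult_left_le_one_le)
    then show ?thesis by (simp add: algebra_simps)
  qed
  finally show ?case by simp
qed

lemma prod_le_factor:
  fixes x :: "nat \<Rightarrow> real"
  assumes "\<And>k. k < l \<Longrightarrow> 0 \<le> x k \<and> x k \<le> 1" and "j < l"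
  shows "(\<Prod>k<l. x k) \<le> x j"
proof -
  have "(\<Prod>k<l. x k) = x j * (\<Prod>k\<in>{..<l} - {j}. x k)"
    using assms(2) by (subst prod.remove[of _ j]) auto
  also have "\<dots> \<le> x j * 1"
    using assms by (intro mult_left_mono prod_le_1) auto
  finally show ?thesis by simp
qed



theorem theorem1:
  fixes m :: "nat \<Rightarrow> 'a::euclidean_space" and b :: "nat \<Rightarrow> real"
    and l :: nat and M :: real
  assumes "\<forall>k<l. m k \<noteq> 0"
    and "bounded (polytope m b l)"
  shows "\<exists>C \<eta>0. \<forall>\<eta>\<ge>\<eta>0. \<forall>f :: 'a \<Rightarrow> real.
           (f \<in> borel_measurable borel \<and> (\<forall>y. 0 \<le> f y \<and> f y \<le> M)
            \<and> prob_space (density lborel (\<lambda>y. ennreal (f y))))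
           \<longrightarrow> \<bar>measure (density lborel (\<lambda>y. ennreal (f y))) (polytope m b l)
                 - (\<integral>y. weta m b l \<eta> y \<partial>(density lborel (\<lambda>y. ennreal (f y))))\<bar>
               \<le> C * sqrt (ln \<eta>) / \<eta>"
proof -
  have P0: "polyt m b l 0 = polytope m b l" unfolding polyt_def polytope_def by simp
  obtain t0 where t0: "0 < t0" "bounded (polyt m b l t0)"
    using bnd[of m b l] assms(2) P0 by auto
  obtain R where R: "0 < R" "\<And>y. y \<in> polyt m b l t0 \<Longrightarrow> norm y \<le> R"
    using t0(2) unfolding bounded_pos by blast
  define V where "V = measure lebesgue (cball (0::'a) (R+1))"
  have V0: "0 \<le> V" unfolding V_def by simp
  define K where "K = (\<Sum>k<l. 4 * sqrt 2 / norm (m k) * V)"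
  have K0: "0 \<le> K" unfolding K_def using V0 by (intro sum_nonneg) auto
  define C where "C = real l + \<bar>M\<bar> * K"
  define \<eta>0 where "\<eta>0 = max (exp 1) (2 / t0\<^sup>2)"
  show ?thesis
  proof (rule exI[of _ C], rule exI[of _ \<eta>0], intro allI impI)
    fix \<eta> :: real and f :: "'a \<Rightarrow> real"
    assume \<eta>: "\<eta>0 \<le> \<eta>"
    assume fa: "f \<in> borel_measurable borel \<and> (\<forall>y. 0 \<le> f y \<and> f y \<le> M)
            \<and> prob_space (density lborel (\<lambda>y. ennreal (f y)))"
    define N where "N = density lborel (\<lambda>y. ennreal (f y))"
    have fm: "f \<in> borel_measurable borel" and f0: "\<And>y. 0 \<le> f y" and fM: "\<And>y. f y \<le> M"
      using fa by auto
    interpret N: prob_space N using fa unfolding N_def by simp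
    have sN: "sets N = sets borel" unfolding N_def by simp
    have M0: "0 \<le> M" using f0[of 0] fM[of 0] by linarith
    have e1: "exp 1 \<le> \<eta>" using \<eta> unfolding \<eta>0_def by simp
    have \<eta>pos: "0 < \<eta>" using e1 exp_gt_zero[of 1] by linarith
    have ln1: "1 \<le> ln \<eta>" using e1 \<eta>pos by (metis ln_exp ln_le_cancel_iff exp_gt_zero)
    define s where "s = sqrt (2 * ln \<eta>)"
    define t where "t = s / \<eta>"
    have s1: "1 \<le> s" unfolding s_def using ln1 by (simp add: real_le_rsqrt)
    have t0': "0 < t" unfolding t_def using s1 \<eta>pos by simp
    have ss: "s\<^sup>2 = 2 * ln \<eta>" unfolding s_def using ln1 by simp
    have es: "exp (- s\<^sup>2 / 2) = 1 / \<eta>" using ss \<eta>pos by (simp add: exp_minus exp_ln inverse_eq_divide)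
    have ttt: "t \<le> t0"
    proof -
      have lnle: "ln \<eta> \<le> \<eta>" using ln_le_minus_one[OF \<eta>pos] by linarith
      have t2: "t\<^sup>2 = 2 * ln \<eta> / \<eta>\<^sup>2" unfolding t_def ss[symmetric] by (rule power_divide)
      have h1: "2 * ln \<eta> / \<eta>\<^sup>2 \<le> 2 * \<eta> / \<eta>\<^sup>2"
        by (rule divide_right_mono) (use lnle in auto)
      have h2: "2 * \<eta> / \<eta>\<^sup>2 = 2 / \<eta>" using \<eta>pos by (simp add: power2_eq_square)
      have t02: "0 < t0\<^sup>2" using t0(1) by simp
      have "2 / t0\<^sup>2 \<le> \<eta>" using \<eta> unfolding \<eta>0_def by linarith
      then have "2 \<le> \<eta> * t0\<^sup>2" using pos_divide_le_eq[OF t02] by blast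
      then have h3: "2 / \<eta> \<le> t0\<^sup>2" using pos_divide_le_eq[OF \<eta>pos] by (simp add: mult.commute)
      have "t\<^sup>2 \<le> t0\<^sup>2" using t2 h1 h2 h3 by linarith
      then show ?thesis using power2_le_imp_le[of t t0] t0(1) by simp
    qed
    have Phi_hi: "1 - 1 / \<eta> \<le> Phi u" if "s \<le> u" for u
      using Phi_upper_tail[OF s1] phi_le[of s] Phi_mono[OF that] es by linarith
    have Phi_lo: "Phi u \<le> 1 / \<eta>" if "u \<le> - s" for u
      using Phi_lower_tail[OF s1] phi_le[of s] Phi_mono[OF that] es by linarith
    define S where "S = polytope m b l"
    define w where "w = weta m b l \<eta>"
    define slab where "slab k = {y. \<bar>b k - m k \<bullet> y\<bar> < t} \<inter> cball (0::'a) R" for k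
    define B where "B = (\<Union>k\<in>{..<l}. slab k)"
    have wx: "\<And>k y. 0 \<le> Phi (\<eta> * (b k - m k \<bullet> y)) \<and> Phi (\<eta> * (b k - m k \<bullet> y)) \<le> 1"
      using Phi_nonneg Phi_le1 by auto
    have w01: "0 \<le> w y" "w y \<le> 1" for y
      unfolding w_def weta_def using wx by (auto intro!: prod_nonneg prod_le_1)
    have Sb: "S \<in> sets borel"
    proof -
      have "closed S" using closed_polyt[of m b l 0] P0 unfolding S_def by simp
      then show ?thesis by simp
    qed
    have slab_sets: "slab k \<in> sets borel" for k
      unfolding slab_def by measurable
    have Bb: "B \<in> sets borel" unfolding B_def using slab_sets by auto
    have wm: "w \<in> borel_measurable borel" unfolding w_def weta_def by measurable
    have key: "\<bar>indicator S y - w y\<bar> \<le> real l / \<eta> + indicator B y" for y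
    proof (cases "y \<in> B")
      case True
      have "0 \<le> real l / \<eta>" using \<eta>pos by simp
      then show ?thesis using w01[of y] True
        by (auto simp: indicator_def split: if_splits)
    next
      case notB: False
      show ?thesis
      proof (cases "\<exists>k<l. t \<le> m k \<bullet> y - b k")
        case True
        then obtain j where j: "j < l" "t \<le> m j \<bullet> y - b j" by blast
        have yS: "y \<notin> S" unfolding S_def polytope_def using j t0' by force
        have "\<eta> * (b j - m j \<bullet> y) \<le> - s"
        proof -
          have "\<eta> * (b j - m j \<bullet> y) \<le> \<eta> * (- t)" using j \<eta>pos by (intro mult_left_mono) auto
          then show ?thesis unfolding t_def using \<eta>pos by simp
        qed
        then have "w y \<le> 1 / \<eta>"
          using prod_le_factor[of l "\<lambda>k. Phi (\<eta> * (b k - m k \<bullet> y))" j] wx j Phi_lo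
          unfolding w_def weta_def by (meson order_trans)
        moreover have "1 / \<eta> \<le> real l / \<eta>" using j \<eta>pos by (simp add: divide_right_mono)
        ultimately show ?thesis using yS w01[of y] by (simp add: indicator_def)
      next
        case False
        then have lt: "\<And>k. k < l \<Longrightarrow> m k \<bullet> y - b k < t" by force
        have "y \<in> polyt m b l t0" unfolding polyt_def using lt ttt by (force intro: less_imp_le)
        then have yR: "y \<in> cball 0 R" using R(2) by simp
        have ge: "t \<le> b k - m k \<bullet> y" if k: "k < l" for k
        proof -
          have "y \<notin> slab k" using notB k unfolding B_def by auto
          then have "t \<le> \<bar>b k - m k \<bullet> y\<bar>" using yR unfolding slab_def by auto
          then show ?thesis using lt[OF k] by linarith
        qed
        have yS: "y \<in> S" unfolding S_def polytope_def using ge t0' by force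
        have hi: "1 - 1 / \<eta> \<le> Phi (\<eta> * (b k - m k \<bullet> y))" if k: "k < l" for k
        proof (rule Phi_hi)
          have "\<eta> * t \<le> \<eta> * (b k - m k \<bullet> y)" using ge[OF k] \<eta>pos by (intro mult_left_mono) auto
          then show "s \<le> \<eta> * (b k - m k \<bullet> y)" unfolding t_def using \<eta>pos by simp
        qed
        have "1 - (\<Sum>k<l. 1 - Phi (\<eta> * (b k - m k \<bullet> y))) \<le> w y"
          unfolding w_def weta_def by (rule prod_ge_bernoulli) (use wx in auto)
        moreover have "(\<Sum>k<l. 1 - Phi (\<eta> * (b k - m k \<bullet> y))) \<le> (\<Sum>k<l. 1 / \<eta>)"
          using hi by (intro sum_mono) (smt (verit) lessThan_iff)
        ultimately have "1 - real l / \<eta> \<le> w y" by simp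
        then show ?thesis using yS w01[of y] notB by (simp add: indicator_def)
      qed
    qed
    have intS: "integrable N (indicator S :: 'a \<Rightarrow> real)"
      using Sb sN by (intro N.integrable_const_bound[where B=1]) (auto simp: indicator_def)
    have intw: "integrable N w"
      using wm sN w01 by (intro N.integrable_const_bound[where B=1]) auto
    have intB: "integrable N (\<lambda>y. real l / \<eta> + indicator B y)"
      using Bb sN \<eta>pos by (intro N.integrable_const_bound[where B="real l / \<eta> + 1"])
        (auto simp: indicator_def)
    have "\<bar>measure N S - (\<integral>y. w y \<partial>N)\<bar> = \<bar>\<integral>y. indicator S y - w y \<partial>N\<bar>"
      using intS intw Sb sN by simp
    also have "\<dots> \<le> (\<integral>y. real l / \<eta> + indicator B y \<partial>N)"
      by (rule integral_abs_bound_integral) (use intS intw intB key in auto)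
    also have "\<dots> = (\<integral>y. real l / \<eta> \<partial>N) + (\<integral>y. indicator B y \<partial>N)"
    proof (rule Bochner_Integration.integral_add)
      show "integrable N (\<lambda>y. indicator B y :: real)"
        using Bb sN by (intro N.integrable_const_bound[where B=1]) (auto simp: indicator_def)
    qed simp
    also have "\<dots> = real l / \<eta> + measure N B"
      using Bb sN by (simp add: N.prob_space)
    finally have step1: "\<bar>measure N S - (\<integral>y. w y \<partial>N)\<bar> \<le> real l / \<eta> + measure N B" .
    have Bbd: "bounded B" unfolding B_def slab_def by (auto intro!: bounded_UN bounded_Int)
    have "emeasure N B = (\<integral>\<^sup>+y. ennreal (f y) * indicator B y \<partial>lborel)"
      unfolding N_def using Bb fm by (subst emeasure_density) auto
    also have "\<dots> \<le> (\<integral>\<^sup>+y. ennreal M * indicator B y \<partial>lborel)"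
      using fM by (intro nn_integral_mono) (auto simp: indicator_def ennreal_leI)
    also have "\<dots> = ennreal M * emeasure lborel B" using Bb by (simp add: nn_integral_cmult_indicator)
    also have "emeasure lborel B = ennreal (measure lborel B)"
      using emeasure_bounded_finite[OF Bbd] by (simp add: emeasure_eq_ennreal_measure)
    finally have "ennreal (measure N B) \<le> ennreal (M * measure lborel B)"
      using M0 by (simp add: N.emeasure_eq_measure ennreal_mult)
    then have step2: "measure N B \<le> M * measure lborel B"
      using M0 by (simp add: ennreal_le_iff)
    have "measure lborel B \<le> (\<Sum>k<l. measure lborel (slab k))"
      unfolding B_def using slab_sets by (intro measure_UNION_le) auto
    also have "\<dots> \<le> (\<Sum>k<l. 4 * t / norm (m k) * V)"
    proof (rule sum_mono)
      fix k assume "k \<in> {..<l}"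
      then have mk: "m k \<noteq> 0" using assms(1) by auto
      have "measure lborel (slab k) = measure lebesgue (slab k)" using slab_sets by simp
      also have "\<dots> = measure lebesgue ({y. \<bar>b k - m k \<bullet> y\<bar> < t} \<inter> cball 0 R)" unfolding slab_def ..
      also have "\<dots> \<le> 4 * t / norm (m k) * V"
        unfolding V_def by (rule slab_measure[OF mk t0']) (use R in simp)
      finally show "measure lborel (slab k) \<le> 4 * t / norm (m k) * V" .
    qed
    also have "\<dots> = sqrt (ln \<eta>) / \<eta> * K"
      unfolding K_def t_def s_def by (simp add: sum_distrib_left real_sqrt_mult algebra_simps)
    finally have step3: "measure lborel B \<le> sqrt (ln \<eta>) / \<eta> * K" .
    have "real l / \<eta> \<le> real l * sqrt (ln \<eta>) / \<eta>"
    proof -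
      have "1 \<le> sqrt (ln \<eta>)" using ln1 by simp
      then show ?thesis using \<eta>pos by (intro divide_right_mono) (auto intro: mult_left_le_one_le[THEN order_trans] simp: mult_le_cancel_left1)
    qed
    moreover have "M * measure lborel B \<le> \<bar>M\<bar> * K * sqrt (ln \<eta>) / \<eta>"
      using mult_left_mono[OF step3 M0] M0 by (simp add: algebra_simps)
    ultimately have "\<bar>measure N S - (\<integral>y. w y \<partial>N)\<bar> \<le> C * sqrt (ln \<eta>) / \<eta>"
      using step1 step2 unfolding C_def by (simp add: algebra_simps add_divide_distrib)
    then show "\<bar>measure (density lborel (\<lambda>y. ennreal (f y))) (polytope m b l)
                 - (\<integral>y. weta m b l \<eta> y \<partial>(density lborel (\<lambda>y. ennreal (f y))))\<bar>
               \<le> C * sqrt (ln \<eta>) / \<eta>"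
      unfolding N_def S_def w_def .
  qed
qed


end
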